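(* Let $n\ge 2$, $c\ge 2$, $d$ prime, and $f:\mathbb{Z}_c^n\to\mathbb{Z}_d$. The distribution $$p(\mathbf{m}|\mathbf{s})=\begin{cases} d^{1-n} & \text{if } \sum_{j=1}^n m_j\equiv f(\mathbf{s}) \pmod d,\\ 0&\text{otherwise},\end{cases}$$ is a vertex (extreme point) of the non-signaling polytope $\mathcal{NS}$ if and only if $f$ is not bi-partite linear.
   Context: $\mathcal{NS}$ is the convex polytope of conditional distributions $p(\mathbf{m}|\mathbf{s})$, $\mathbf{m}\in\mathbb{Z}_d^n$, $\mathbf{s}\in\mathbb{Z}_c^n$, that are non-signaling: for every subset $S$ of parties, the marginal of $(m_j)_{j\in S}$ depends only on $(s_j)_{j\in S}$. A bipartition $\{A,B\}$ of $\{1,\dots,n\}$ is a division into two disjoint non-empty sets whose union is $\{1,\dots,n\}$. The function $f$ is bi-partite linear if there exist a bipartition $\{A,B\}$ and functions $f^A$ of $\mathbf{s}^A=(s_j)_{j\in A}$ and $f^B$ of $\mathbf{s}^B=(s_j)_{j\in B}$, valued in $\mathbb{Z}_d$, with $f(\mathbf{s})=f^A(\mathbf{s}^A)+f^B(\mathbf{s}^B)$ (mod $d$) for all $\mathbf{s}$. *)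

theory Defs
  imports Complex_Main "HOL-Computational_Algebra.Primes"
begin

(* Strings of length n over the alphabet Z_k = {0..<k}; party j (0 <= j < n) holds entry j. *)
definition words :: "nat \<Rightarrow> nat \<Rightarrow> nat list set" where
  "words n k = {x. length x = n \<and> (\<forall>a\<in>set x. a < k)}"

(* Conditional distributions p(m|s), with m in Z_d^n and s in Z_c^n; represented as
   real functions vanishing outside the domain. *)
definition cond_dist :: "nat \<Rightarrow> nat \<Rightarrow> nat \<Rightarrow> (nat list \<Rightarrow> nat list \<Rightarrow> real) \<Rightarrow> bool" where
  "cond_dist n c d p \<longleftrightarrow>
     (\<forall>m s. p m s \<ge> 0) \<and>
     (\<forall>m s. (m \<notin> words n d \<or> s \<notin> words n c) \<longrightarrow> p m s = 0) \<and>
     (\<forall>s\<in>words n c. (\<Sum>m\<in>words n d. p m s) = 1)"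

definition marginal :: "nat \<Rightarrow> nat \<Rightarrow> (nat list \<Rightarrow> nat list \<Rightarrow> real) \<Rightarrow> nat set
    \<Rightarrow> nat list \<Rightarrow> nat list \<Rightarrow> real" where
  "marginal n d p S m s = (\<Sum>m'\<in>{m'\<in>words n d. \<forall>j\<in>S. m' ! j = m ! j}. p m' s)"

definition non_signaling :: "nat \<Rightarrow> nat \<Rightarrow> nat \<Rightarrow> (nat list \<Rightarrow> nat list \<Rightarrow> real) \<Rightarrow> bool" where
  "non_signaling n c d p \<longleftrightarrow>
     (\<forall>S \<subseteq> {0..<n}. \<forall>s\<in>words n c. \<forall>s'\<in>words n c. \<forall>m\<in>words n d.
        (\<forall>j\<in>S. s ! j = s' ! j) \<longrightarrow> marginal n d p S m s = marginal n d p S m s')"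

definition NS :: "nat \<Rightarrow> nat \<Rightarrow> nat \<Rightarrow> (nat list \<Rightarrow> nat list \<Rightarrow> real) set" where
  "NS n c d = {p. cond_dist n c d p \<and> non_signaling n c d p}"

definition extreme_point_fun :: "('a \<Rightarrow> 'b \<Rightarrow> real) \<Rightarrow> ('a \<Rightarrow> 'b \<Rightarrow> real) set \<Rightarrow> bool" where
  "extreme_point_fun p K \<longleftrightarrow> p \<in> K \<and>
     (\<forall>q\<in>K. \<forall>r\<in>K. \<forall>t::real. 0 < t \<and> t < 1 \<and> q \<noteq> r \<longrightarrow>
        p \<noteq> (\<lambda>m s. (1 - t) * q m s + t * r m s))"

definition depends_only_on :: "nat \<Rightarrow> nat \<Rightarrow> nat set \<Rightarrow> (nat list \<Rightarrow> nat) \<Rightarrow> bool" where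
  "depends_only_on n c A g \<longleftrightarrow>
     (\<forall>s\<in>words n c. \<forall>s'\<in>words n c. (\<forall>j\<in>A. s ! j = s' ! j) \<longrightarrow> g s = g s')"

definition bipartite_linear :: "nat \<Rightarrow> nat \<Rightarrow> nat \<Rightarrow> (nat list \<Rightarrow> nat) \<Rightarrow> bool" where
  "bipartite_linear n c d f \<longleftrightarrow>
     (\<exists>A B fA fB. A \<noteq> {} \<and> B \<noteq> {} \<and> A \<inter> B = {} \<and> A \<union> B = {0..<n} \<and>
        depends_only_on n c A fA \<and> depends_only_on n c B fB \<and>
        (\<forall>s\<in>words n c. fA s < d \<and> fB s < d) \<and>
        (\<forall>s\<in>words n c. f s mod d = (fA s + fB s) mod d))"

definition pf :: "nat \<Rightarrow> nat \<Rightarrow> nat \<Rightarrow> (nat list \<Rightarrow> nat) \<Rightarrow> nat list \<Rightarrow> nat list \<Rightarrow> real" where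
  "pf n c d f m s =
     (if m \<in> words n d \<and> s \<in> words n c \<and> sum_list m mod d = f s mod d
      then 1 / real d ^ (n - 1) else 0)"

end

theory Submission
  imports Defs
begin



lemma modeq_int: "((a::nat) mod d = b mod d) \<longleftrightarrow> int d dvd int a - int b"
  by (metis of_nat_eq_iff of_nat_mod mod_eq_dvd_iff)

lemma mod_cancel_add: "((a::nat) + k) mod d = (b + k) mod d \<longleftrightarrow> a mod d = b mod d"
  unfolding modeq_int by simp

lemma mod_helper: "a = b + d * k \<Longrightarrow> a mod d = (b::nat) mod d" by simp

lemma dm1: "0 < d \<Longrightarrow> a + (d-1)*a = d*(a::nat)" by (cases d) auto

definition shift :: "nat \<Rightarrow> nat \<Rightarrow> nat \<Rightarrow> nat list \<Rightarrow> nat list" where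
  "shift d j k m = m[j := (m!j + k) mod d]"

declare list_update_beyond[simp]

lemma shift_length[simp]: "length (shift d j k m) = length m"
  by (simp add: shift_def)

lemma shift_nth: "shift d j k m ! i = (if i = j \<and> j < length m then (m!j + k) mod d else m!i)"
  by (auto simp: shift_def nth_list_update)

lemma shift_shift: "shift d j a (shift d j b m) = shift d j (a+b) m"
proof (cases "j < length m")
  case True
  have eq: "((m!j + b) mod d + a) mod d = (m!j + (a+b)) mod d"
    by (metis mod_add_left_eq add.assoc add.commute)
  show ?thesis unfolding shift_def using True
    by (simp only: nth_list_update_eq list_update_overwrite eq length_list_update)
qed (simp add: shift_def)

lemma shift_comm: "shift d i a (shift d j b m) = shift d j b (shift d i a m)"
proof (cases "i = j")
  case True then show ?thesis by (simp add: shift_shift add.commute)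
next
  case False then show ?thesis by (simp add: shift_def list_update_swap nth_list_update)
qed

lemma shift_mod: "a mod d = b mod d \<Longrightarrow> shift d j a m = shift d j b m"
  unfolding shift_def by (metis mod_add_right_eq)

lemma words_iff: "m \<in> words n k \<longleftrightarrow> length m = n \<and> (\<forall>i<n. m!i < k)"
  by (auto simp: words_def in_set_conv_nth) (metis nth_mem)

lemma shift_id: "m \<in> words n d \<Longrightarrow> k mod d = 0 \<Longrightarrow> shift d j k m = m"
proof -
  assume m: "m \<in> words n d" and k: "k mod d = 0"
  have "m[j := (m!j + k) mod d] = m"
  proof (cases "j < length m")
    case True
    then have "(m!j + k) mod d = m!j" using m k by (metis add.right_neutral mod_add_right_eq mod_less words_iff)
    then show ?thesis by simp
  qed simp
  then show ?thesis by (simp add: shift_def)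
qed

lemma shift_words: "m \<in> words n d \<Longrightarrow> 0 < d \<Longrightarrow> shift d j k m \<in> words n d"
  by (auto simp: words_iff shift_nth)

lemma update_words: "s \<in> words n c \<Longrightarrow> x < c \<Longrightarrow> s[j := x] \<in> words n c"
  by (cases "j < length s") (auto simp: words_iff nth_list_update)

lemma sum_list_upd: "j < length xs \<Longrightarrow> sum_list (xs[j := v]) + xs!j = sum_list xs + (v::nat)"
proof (induction xs arbitrary: j)
  case Nil then show ?case by simp
next
  case (Cons a xs) then show ?case by (cases j) auto
qed

lemma shift_sum: "j < length m \<Longrightarrow> sum_list (shift d j k m) mod d = (sum_list m + k) mod d"
proof -
  assume j: "j < length m"
  have "sum_list (shift d j k m) + m!j = sum_list m + (m!j + k) mod d"
    using sum_list_upd[OF j] by (simp add: shift_def)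
  then have "(sum_list (shift d j k m) + m!j) mod d = (sum_list m + k + m!j) mod d"
    by (metis add.assoc add.commute mod_add_right_eq)
  then show ?thesis using mod_cancel_add by blast
qed

lemma shift_sumA: "finite A \<Longrightarrow> j < length m \<Longrightarrow>
   (\<Sum>i\<in>A. shift d j k m ! i) mod d = (if j \<in> A then (\<Sum>i\<in>A. m!i) + k else (\<Sum>i\<in>A. m!i)) mod d"
proof (cases "j \<in> A")
  case False
  assume "finite A" "j < length m"
  then show ?thesis using False by (auto simp: shift_nth intro!: sum.cong arg_cong[where f="\<lambda>x. x mod d"])
next
  case True
  assume fin: "finite A" and j: "j < length m"
  have eq: "(\<Sum>i\<in>A - {j}. shift d j k m ! i) = (\<Sum>i\<in>A - {j}. m ! i)"
    by (rule sum.cong) (auto simp: shift_nth)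
  have "(\<Sum>i\<in>A. shift d j k m ! i) = shift d j k m ! j + (\<Sum>i\<in>A - {j}. shift d j k m ! i)"
    using sum.remove[OF fin True] by blast
  also have "\<dots> = (m!j + k) mod d + (\<Sum>i\<in>A - {j}. m ! i)" using eq j by (simp add: shift_nth)
  finally have "(\<Sum>i\<in>A. shift d j k m ! i) mod d = (m!j + k + (\<Sum>i\<in>A - {j}. m ! i)) mod d"
    by (simp add: mod_add_left_eq)
  also have "\<dots> = ((\<Sum>i\<in>A. m!i) + k) mod d"
    using sum.remove[OF fin True, of "\<lambda>i. m!i"] by (simp add: algebra_simps)
  finally show ?thesis using True by simp
qed

lemma finite_words: "finite (words n d)"
proof -
  have "words n d = {xs. set xs \<subseteq> {..<d} \<and> length xs = n}" by (auto simp: words_def)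
  then show ?thesis by (simp add: finite_lists_length_eq)
qed

lemma card_words: "card (words n d) = d ^ n"
proof -
  have "words n d = {xs. set xs \<subseteq> {..<d} \<and> length xs = n}" by (auto simp: words_def)
  then show ?thesis by (simp add: card_lists_length_eq)
qed

definition mix :: "nat \<Rightarrow> nat list \<Rightarrow> nat list \<Rightarrow> nat list" where
  "mix k s s' = map (\<lambda>i. if i < k then s'!i else s!i) [0..<length s]"

lemma mix_length[simp]: "length (mix k s s') = length s" by (simp add: mix_def)
lemma mix_nth: "i < length s \<Longrightarrow> mix k s s' ! i = (if i < k then s'!i else s!i)"
  by (simp add: mix_def)
lemma mix_0: "mix 0 s s' = s" by (simp add: mix_def map_nth)
lemma mix_n: "length s' = length s \<Longrightarrow> mix (length s) s s' = s'"
  by (auto simp: mix_def intro!: nth_equalityI)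
lemma mix_Suc: "k < length s \<Longrightarrow> mix (Suc k) s s' = (mix k s s')[k := s'!k]"
  by (auto simp: mix_def nth_list_update intro!: nth_equalityI)
lemma mix_words: "s \<in> words n c \<Longrightarrow> s' \<in> words n c \<Longrightarrow> mix k s s' \<in> words n c"
  by (auto simp: words_iff mix_nth)

lemma path:
  assumes "s \<in> words n c" "s' \<in> words n c" "P s"
    and step: "\<And>k. k < n \<Longrightarrow> P (mix k s s') \<Longrightarrow> P ((mix k s s')[k := s'!k])"
  shows "P s'"
proof -
  have "k \<le> n \<Longrightarrow> P (mix k s s')" for k
  proof (induction k)
    case 0 then show ?case using assms by (simp add: mix_0)
  next
    case (Suc k)
    then have "k < length s" using assms(1) by (simp add: words_iff)
    then show ?case using Suc step[of k] assms(1) by (simp add: mix_Suc words_iff)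
  qed
  then have "P (mix n s s')" by simp
  moreover have "length s = n" "length s' = n" using assms by (auto simp: words_iff)
  ultimately show ?thesis using mix_n[of s' s] by simp
qed

lemma card_sum_words: "0 < d \<Longrightarrow> card {m \<in> words (Suc k) d. sum_list m mod d = r mod d} = d ^ k"
proof -
  assume d: "0 < d"
  let ?g = "\<lambda>w. ((r + (d-1) * sum_list w) mod d) # w"
  have key: "(a + sum_list w) mod d = r mod d \<longleftrightarrow> a mod d = (r + (d-1) * sum_list w) mod d" for a w
  proof -
    have eq: "(r + (d-1) * sum_list w + sum_list w) = r + d * sum_list w" using d
      by (cases d) (auto simp: algebra_simps)
    have "(r + (d-1) * sum_list w + sum_list w) mod d = (r + d * sum_list w) mod d"
      by (simp only: eq)
    also have "\<dots> = r mod d" by simp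
    finally have "(r + (d-1) * sum_list w + sum_list w) mod d = r mod d" .
    then show ?thesis using mod_cancel_add[of a "sum_list w" d "r + (d-1) * sum_list w"] by simp
  qed
  have "{m \<in> words (Suc k) d. sum_list m mod d = r mod d} = ?g ` words k d"
  proof (intro set_eqI iffI)
    fix m assume m: "m \<in> {m \<in> words (Suc k) d. sum_list m mod d = r mod d}"
    then obtain a w where mw: "m = a # w" by (cases m) (auto simp: words_def)
    with m have "a < d" "w \<in> words k d" "(a + sum_list w) mod d = r mod d" by (auto simp: words_def)
    with key have "a = (r + (d-1) * sum_list w) mod d" by simp
    with mw \<open>w \<in> words k d\<close> show "m \<in> ?g ` words k d" by blast
  next
    fix m assume "m \<in> ?g ` words k d"
    then obtain w where "w \<in> words k d" "m = ?g w" by blast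
    then show "m \<in> {m \<in> words (Suc k) d. sum_list m mod d = r mod d}"
      using key[of "(r + (d-1) * sum_list w) mod d" w] d by (auto simp: words_def)
  qed
  moreover have "inj_on ?g (words k d)" by (auto simp: inj_on_def)
  ultimately show ?thesis by (simp add: card_image card_words)
qed




lemma NS_from_shift:
  assumes d: "0 < d"
    and sh: "\<And>s j x. s \<in> words n c \<Longrightarrow> j < n \<Longrightarrow> x < c \<Longrightarrow>
               \<exists>K. \<forall>m\<in>words n d. g (shift d j K m) (s[j:=x]) = g m s"
  shows "non_signaling n c d g"
  unfolding non_signaling_def
proof (intro allI impI ballI)
  fix S s s' m
  assume S: "S \<subseteq> {0..<n}" and s: "s \<in> words n c" and s': "s' \<in> words n c"
    and m: "m \<in> words n d" and agree: "\<forall>j\<in>S. s ! j = s' ! j"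
  define E where "E = {m'\<in>words n d. \<forall>j\<in>S. m'!j = m!j}"
  have marg: "marginal n d g S m t = (\<Sum>m'\<in>E. g m' t)" for t
    by (simp add: marginal_def E_def)
  have "marginal n d g S m s' = marginal n d g S m s"
  proof (rule path[OF s s', where P="\<lambda>t. marginal n d g S m t = marginal n d g S m s"])
    show "marginal n d g S m s = marginal n d g S m s" by simp
  next
    fix k assume k: "k < n" and IH: "marginal n d g S m (mix k s s') = marginal n d g S m s"
    define t where "t = mix k s s'"
    have t: "t \<in> words n c" using mix_words[OF s s'] by (simp add: t_def)
    have ls: "length s = n" using s by (simp add: words_iff)
    show "marginal n d g S m ((mix k s s')[k := s'!k]) = marginal n d g S m s"
    proof (cases "k \<in> S")
      case True
      then have "t ! k = s' ! k" using agree ls k by (simp add: t_def mix_nth)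
      then have "t[k := s'!k] = t" by (metis list_update_id)
      then show ?thesis using IH by (simp add: t_def)
    next
      case False
      have x: "s'!k < c" using s' k by (simp add: words_iff)
      obtain K where K: "\<forall>m\<in>words n d. g (shift d k K m) (t[k:=s'!k]) = g m t"
        using sh[OF t k x] by blast
      have inv: "shift d k (K*(d-1)) (shift d k K a) = a" if "a \<in> words n d" for a
      proof -
        have "K*(d-1) + K = K * d" using d by (cases d) (auto simp: algebra_simps)
        then show ?thesis using shift_id[OF that] by (simp add: shift_shift)
      qed
      have inv2: "shift d k K (shift d k (K*(d-1)) a) = a" if "a \<in> words n d" for a
      proof -
        have "K + K*(d-1) = K * d" using d by (cases d) (auto simp: algebra_simps)
        then show ?thesis using shift_id[OF that] by (simp add: shift_shift)
      qed
      have inE: "shift d k L a \<in> E" if "a \<in> E" for a L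
        using that False d shift_words[of a n d k L] by (auto simp: E_def shift_nth)
      have bij: "bij_betw (shift d k K) E E"
        by (rule bij_betw_byWitness[where f'="shift d k (K*(d-1))"])
           (use inv inv2 inE E_def in auto)
      have "(\<Sum>m'\<in>E. g m' (t[k:=s'!k])) = (\<Sum>m'\<in>E. g (shift d k K m') (t[k:=s'!k]))"
        using sum.reindex_bij_betw[OF bij, of "\<lambda>m'. g m' (t[k:=s'!k])"] by simp
      also have "\<dots> = (\<Sum>m'\<in>E. g m' t)"
        using K by (intro sum.cong) (auto simp: E_def)
      finally show ?thesis using IH marg by (simp add: t_def)
    qed
  qed
  then show "marginal n d g S m s = marginal n d g S m s'" by simp
qed

locale setting =
  fixes n c d :: nat and f :: "nat list \<Rightarrow> nat"
  assumes n2: "n \<ge> 2" and c2: "c \<ge> 2" and pr: "prime d" and flt: "\<forall>s\<in>words n c. f s < d"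
begin

lemma d2: "d \<ge> 2" using pr prime_ge_2_nat by blast
lemma d0: "0 < d" using d2 by simp

definition W :: "nat list \<Rightarrow> nat list set" where
  "W s = {m \<in> words n d. sum_list m mod d = f s mod d}"

lemma card_W: "card (W s) = d ^ (n - 1)"
proof -
  have "n = Suc (n - 1)" using n2 by simp
  then have "W s = {m \<in> words (Suc (n-1)) d. sum_list m mod d = f s mod d}" by (simp add: W_def)
  then show ?thesis using card_sum_words[OF d0] by simp
qed

lemma finite_W: "finite (W s)" using finite_words by (simp add: W_def)

abbreviation "p \<equiv> pf n c d f"

lemma pf_shift:
  assumes s: "s \<in> words n c" and j: "j < n" and x: "x < c" and m: "m \<in> words n d"
    and K: "(f s + K) mod d = f (s[j:=x]) mod d"
  shows "p (shift d j K m) (s[j:=x]) = p m s"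
proof -
  have jl: "j < length m" using m j by (simp add: words_iff)
  have "(sum_list (shift d j K m) mod d = f (s[j:=x]) mod d) \<longleftrightarrow> sum_list m mod d = f s mod d"
    using shift_sum[OF jl, of d K] K mod_cancel_add by metis
  then show ?thesis
    using m s update_words[OF s x, of j] shift_words[OF m d0, of j K] by (simp add: pf_def)
qed

lemma sum_const_W: "(\<Sum>m\<in>words n d. if sum_list m mod d = f s mod d then a else 0) = real (card (W s)) * a"
proof -
  have "(\<Sum>m\<in>words n d. if sum_list m mod d = f s mod d then a else 0) = (\<Sum>m\<in>W s. a)"
    unfolding W_def using sum.inter_filter[OF finite_words, of "\<lambda>_. a"] by simp
  then show ?thesis by simp
qed

lemma pf_NS: "p \<in> NS n c d"
proof -
  have cd: "cond_dist n c d p"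
    unfolding cond_dist_def
  proof (intro conjI allI impI ballI)
    fix m s show "0 \<le> p m s" by (simp add: pf_def)
  next
    fix m s assume "m \<notin> words n d \<or> s \<notin> words n c" then show "p m s = 0" by (auto simp: pf_def)
  next
    fix s assume s: "s \<in> words n c"
    have "(\<Sum>m\<in>words n d. p m s) = (\<Sum>m\<in>words n d. if sum_list m mod d = f s mod d then 1 / real d ^ (n-1) else 0)"
      using s by (intro sum.cong) (auto simp: pf_def)
    also have "\<dots> = 1" using sum_const_W card_W d0 by simp
    finally show "(\<Sum>m\<in>words n d. p m s) = 1" .
  qed
  have ns: "non_signaling n c d p"
  proof (rule NS_from_shift[OF d0])
    fix s j x assume s: "s \<in> words n c" and j: "j < n" and x: "x < c"
    let ?K = "f (s[j:=x]) + (d-1) * f s"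
    have "f s + ?K = f (s[j:=x]) + d * f s" using dm1[OF d0, of "f s"] by (simp add: algebra_simps)
    then have "(f s + ?K) mod d = f (s[j:=x]) mod d" by (rule mod_helper)
    then show "\<exists>K. \<forall>m\<in>words n d. p (shift d j K m) (s[j:=x]) = p m s"
      using pf_shift[OF s j x] by blast
  qed
  show ?thesis using cd ns by (simp add: NS_def)
qed

end



lemma shift2_sum: "i < length m \<Longrightarrow> j < length m \<Longrightarrow>
  sum_list (shift d i a (shift d j b m)) mod d = (sum_list m + a + b) mod d"
proof -
  assume i: "i < length m" and j: "j < length m"
  have "sum_list (shift d i a (shift d j b m)) mod d = (sum_list (shift d j b m) + a) mod d"
    using shift_sum[of i "shift d j b m" d a] i by simp
  also have "\<dots> = (sum_list (shift d j b m) mod d + a) mod d" by (simp add: mod_add_left_eq)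
  also have "\<dots> = ((sum_list m + b) mod d + a) mod d" using shift_sum[OF j] by simp
  also have "\<dots> = (sum_list m + a + b) mod d" by (simp add: mod_add_left_eq mod_add_right_eq ac_simps)
  finally show ?thesis .
qed

lemma shift2_sumA: "finite A \<Longrightarrow> i < length m \<Longrightarrow> j < length m \<Longrightarrow> i \<in> A \<Longrightarrow> j \<notin> A \<Longrightarrow>
  (\<Sum>k\<in>A. shift d i a (shift d j b m) ! k) mod d = ((\<Sum>k\<in>A. m!k) + a) mod d"
proof -
  assume fin: "finite A" and i: "i < length m" and j: "j < length m" and iA: "i \<in> A" and jA: "j \<notin> A"
  have "(\<Sum>k\<in>A. shift d i a (shift d j b m) ! k) mod d = ((\<Sum>k\<in>A. shift d j b m ! k) + a) mod d"
    using shift_sumA[OF fin, of i "shift d j b m" d a] i iA by simp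
  also have "\<dots> = ((\<Sum>k\<in>A. shift d j b m ! k) mod d + a) mod d" by (simp add: mod_add_left_eq)
  also have "\<dots> = ((\<Sum>k\<in>A. m ! k) mod d + a) mod d" using shift_sumA[OF fin j, of d b] jA by simp
  also have "\<dots> = ((\<Sum>k\<in>A. m!k) + a) mod d" by (simp add: mod_add_left_eq)
  finally show ?thesis .
qed

context setting begin

lemma BL_not_extreme:
  assumes bl: "bipartite_linear n c d f"
  shows "\<not> extreme_point_fun p (NS n c d)"
proof -
  obtain A B fA fB where A: "A \<noteq> {}" and B: "B \<noteq> {}" and AB: "A \<inter> B = {}" and AuB: "A \<union> B = {0..<n}"
    and dA: "depends_only_on n c A fA" and dB: "depends_only_on n c B fB"
    and lt: "\<forall>s\<in>words n c. fA s < d \<and> fB s < d"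
    and feq: "\<forall>s\<in>words n c. f s mod d = (fA s + fB s) mod d"
    using bl unfolding bipartite_linear_def by blast
  obtain i where iA: "i \<in> A" using A by blast
  obtain j where jB: "j \<in> B" using B by blast
  have finA: "finite A" using AuB by (metis finite_Un finite_atLeastLessThan)
  have i: "i < n" "j < n" using iA jB AuB by auto
  have ij: "i \<noteq> j" using iA jB AB by auto
  have jA: "j \<notin> A" using jB AB by auto
  define ind where "ind a m s = (if (\<Sum>k\<in>A. m!k) mod d = (fA s + a) mod d then 1 else (0::real))" for a m s
  define g where "g e m s = p m s * (1 + e * (ind 0 m s - ind 1 m s))" for e m s
  define F where "F a s = {m \<in> words n d. sum_list m mod d = f s mod d \<and> (\<Sum>k\<in>A. m!k) mod d = (fA s + a) mod d}" for a s
  have sumF: "(\<Sum>m\<in>words n d. p m s * ind a m s) = real (card (F a s)) * (1 / real d ^ (n-1))"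
    if s: "s \<in> words n c" for a s
  proof -
    have "(\<Sum>m\<in>words n d. p m s * ind a m s) = (\<Sum>m\<in>words n d. if m \<in> F a s then 1 / real d ^ (n-1) else 0)"
      using s by (intro sum.cong) (auto simp: pf_def ind_def F_def)
    also have "\<dots> = (\<Sum>m\<in>F a s. 1 / real d ^ (n-1))"
      using sum.inter_filter[OF finite_words, of "\<lambda>_. 1 / real d ^ (n-1)" n d "\<lambda>m. m \<in> F a s"]
      by (simp add: F_def)
    finally show ?thesis by simp
  qed
  have cardF: "card (F 0 s) = card (F 1 s)" for s
  proof -
    let ?sg = "\<lambda>m. shift d i 1 (shift d j (d-1) m)"
    let ?tau = "\<lambda>m. shift d i (d-1) (shift d j 1 m)"
    have dd: "1 + (d - 1) = d" using d0 by simp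
    have inv1: "?tau (?sg m) = m" if "m \<in> words n d" for m
    proof -
      have "?tau (?sg m) = shift d i (d-1) (shift d i 1 (shift d j 1 (shift d j (d-1) m)))"
        by (simp only: shift_comm[of d j 1 i 1])
      also have "\<dots> = shift d i (d-1+1) (shift d j (1 + (d-1)) m)"
        by (simp only: shift_shift)
      also have "\<dots> = m" using dd that shift_words[OF that d0] by (simp add: shift_id)
      finally show ?thesis .
    qed
    have inv2: "?sg (?tau m) = m" if "m \<in> words n d" for m
    proof -
      have "?sg (?tau m) = shift d i 1 (shift d i (d-1) (shift d j (d-1) (shift d j 1 m)))"
        by (simp only: shift_comm[of d j "d-1" i "d-1"])
      also have "\<dots> = shift d i (1 + (d-1)) (shift d j (d-1+1) m)"
        by (simp only: shift_shift)
      also have "\<dots> = m" using dd that shift_words[OF that d0] by (simp add: shift_id)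
      finally show ?thesis .
    qed
    have sg: "?sg m \<in> F 1 s" if "m \<in> F 0 s" for m
    proof -
      have m: "m \<in> words n d" using that by (simp add: F_def)
      then have l: "i < length m" "j < length m" using i by (auto simp: words_iff)
      have "sum_list (?sg m) mod d = (sum_list m + 1 + (d-1)) mod d" using shift2_sum[OF l] .
      also have "\<dots> = (sum_list m + d * 1) mod d" using dd by (simp add: ac_simps)
      finally have 1: "sum_list (?sg m) mod d = f s mod d" using that by (simp add: F_def)
      have "(\<Sum>k\<in>A. ?sg m ! k) mod d = ((\<Sum>k\<in>A. m!k) + 1) mod d"
        using shift2_sumA[OF finA l iA jA] .
      also have "\<dots> = ((\<Sum>k\<in>A. m!k) mod d + 1) mod d" by (metis mod_add_left_eq)
      also have "\<dots> = (fA s mod d + 1) mod d" using that by (simp add: F_def)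
      also have "\<dots> = (fA s + 1) mod d" by (metis mod_add_left_eq)
      finally show ?thesis using 1 shift_words[OF shift_words[OF m d0] d0] by (simp add: F_def)
    qed
    have tau: "?tau m \<in> F 0 s" if "m \<in> F 1 s" for m
    proof -
      have m: "m \<in> words n d" using that by (simp add: F_def)
      then have l: "i < length m" "j < length m" using i by (auto simp: words_iff)
      have "sum_list (?tau m) mod d = (sum_list m + (d-1) + 1) mod d" using shift2_sum[OF l] .
      also have "\<dots> = (sum_list m + d * 1) mod d" using dd by (simp add: ac_simps)
      finally have 1: "sum_list (?tau m) mod d = f s mod d" using that by (simp add: F_def)
      have "(\<Sum>k\<in>A. ?tau m ! k) mod d = ((\<Sum>k\<in>A. m!k) + (d-1)) mod d"
        using shift2_sumA[OF finA l iA jA] .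
      also have "\<dots> = ((\<Sum>k\<in>A. m!k) mod d + (d-1)) mod d" by (simp add: mod_add_left_eq)
      also have "\<dots> = ((fA s + 1) mod d + (d-1)) mod d" using that by (simp add: F_def)
      also have "\<dots> = ((fA s + 1) + (d-1)) mod d" by (metis mod_add_left_eq)
      also have "(fA s + 1) + (d-1) = fA s + d * 1" using dd by simp
      finally show ?thesis using 1 shift_words[OF shift_words[OF m d0] d0] by (simp add: F_def)
    qed
    have "bij_betw ?sg (F 0 s) (F 1 s)"
      by (rule bij_betw_byWitness[where f'="?tau"]) (use inv1 inv2 sg tau F_def in auto)
    then show ?thesis by (rule bij_betw_same_card)
  qed
  have gNS: "g e \<in> NS n c d" if e: "-1 \<le> e" "e \<le> 1" for e
  proof -
    have cd: "cond_dist n c d (g e)"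
      unfolding cond_dist_def
    proof (intro conjI allI impI ballI)
      fix m s
      have "0 \<le> 1 + e * (ind 0 m s - ind 1 m s)" using e by (auto simp: ind_def)
      then show "0 \<le> g e m s" by (simp add: g_def pf_def)
    next
      fix m s assume "m \<notin> words n d \<or> s \<notin> words n c" then show "g e m s = 0" by (auto simp: g_def pf_def)
    next
      fix s assume s: "s \<in> words n c"
      have "(\<Sum>m\<in>words n d. g e m s) = (\<Sum>m\<in>words n d. p m s) + e * ((\<Sum>m\<in>words n d. p m s * ind 0 m s) - (\<Sum>m\<in>words n d. p m s * ind 1 m s))"
        by (simp add: g_def algebra_simps sum.distrib sum_distrib_left sum_subtractf)
      also have "\<dots> = 1" using pf_NS s sumF[OF s] cardF by (simp add: NS_def cond_dist_def)
      finally show "(\<Sum>m\<in>words n d. g e m s) = 1" .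
    qed
    have ns: "non_signaling n c d (g e)"
    proof (rule NS_from_shift[OF d0])
      fix s jj x assume s: "s \<in> words n c" and jj: "jj < n" and x: "x < c"
      define s' where "s' = s[jj:=x]"
      have s': "s' \<in> words n c" using update_words[OF s x] by (simp add: s'_def)
      let ?K = "f s' + (d-1) * f s"
      have "f s + ?K = f s' + d * f s" using dm1[OF d0, of "f s"] by (simp add: algebra_simps)
      then have K: "(f s + ?K) mod d = f s' mod d" by (rule mod_helper)
      have indeq: "ind a (shift d jj ?K m) s' = ind a m s" if m: "m \<in> words n d" for a m
      proof (cases "jj \<in> A")
        case True
        then have "jj \<notin> B" using AB by auto
        then have "fB s' = fB s" using dB s s' unfolding depends_only_on_def s'_def
          by (metis nth_list_update_neq)
        have "(fA s + fB s + ?K) mod d = ((fA s + fB s) mod d + ?K) mod d" by (metis mod_add_left_eq)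
        also have "\<dots> = (f s mod d + ?K) mod d" using feq s by simp
        also have "\<dots> = f s' mod d" using K by (metis mod_add_left_eq)
        also have "\<dots> = (fA s' + fB s') mod d" using feq s' by simp
        finally have "(fA s + fB s + ?K) mod d = (fA s' + fB s) mod d" using \<open>fB s' = fB s\<close> by simp
        then have "(fA s + ?K + fB s) mod d = (fA s' + fB s) mod d" by (simp add: ac_simps)
        then have fa: "(fA s + ?K) mod d = fA s' mod d"
          using mod_cancel_add[of "fA s + ?K" "fB s" d "fA s'"] by simp
        have jl: "jj < length m" using m jj by (simp add: words_iff)
        have e1: "(\<Sum>k\<in>A. shift d jj ?K m ! k) mod d = ((\<Sum>k\<in>A. m!k) + ?K) mod d"
          using shift_sumA[OF finA jl] True by simp
        have "(fA s + a + ?K) mod d = ((fA s + ?K) mod d + a) mod d"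
          by (metis mod_add_left_eq add.assoc add.commute)
        also have "\<dots> = (fA s' + a) mod d" using fa by (metis mod_add_left_eq)
        finally have e2: "(fA s' + a) mod d = (fA s + a + ?K) mod d" by simp
        have "((\<Sum>k\<in>A. shift d jj ?K m ! k) mod d = (fA s' + a) mod d) \<longleftrightarrow> ((\<Sum>k\<in>A. m!k) mod d = (fA s + a) mod d)"
          unfolding e1 e2 by (rule mod_cancel_add)
        then show ?thesis unfolding ind_def by simp
      next
        case False
        then have "fA s' = fA s" using dA s s' unfolding depends_only_on_def s'_def
          by (metis nth_list_update_neq)
        moreover have jl: "jj < length m" using m jj by (simp add: words_iff)
        ultimately show ?thesis unfolding ind_def using shift_sumA[OF finA jl, of d ?K] False by simp
      qed
      have "\<forall>m\<in>words n d. g e (shift d jj ?K m) s' = g e m s"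
        using indeq pf_shift[OF s jj x _ K[unfolded s'_def]] by (simp add: g_def s'_def)
      then show "\<exists>K. \<forall>m\<in>words n d. g e (shift d jj K m) (s[jj:=x]) = g e m s"
        unfolding s'_def by blast
    qed
    show ?thesis using cd ns by (simp add: NS_def)
  qed
  define s0 where "s0 = replicate n (0::nat)"
  have s0: "s0 \<in> words n c" using c2 by (simp add: s0_def words_def)
  define a0 where "a0 = fA s0 mod d"
  define b0 where "b0 = (f s0 + (d-1) * a0) mod d"
  define m0 where "m0 = map (\<lambda>k. if k = i then a0 else if k = j then b0 else 0) [0..<n]"
  have m0w: "m0 \<in> words n d" using d0 by (auto simp: words_iff m0_def a0_def b0_def)
  have termeq: "(if k = i then a0 else if k = j then b0 else 0) = (if k = i then a0 else 0) + (if k = j then b0 else 0)" for k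
    using ij by auto
  have "sum_list m0 = (\<Sum>k\<in>{0..<n}. (if k = i then a0 else 0) + (if k = j then b0 else 0))"
    unfolding m0_def interv_sum_list_conv_sum_set_nat termeq by simp
  also have "\<dots> = a0 + b0" using i by (simp add: sum.distrib)
  finally have sm0: "sum_list m0 = a0 + b0" .
  have "(a0 + b0) mod d = (a0 + (f s0 + (d-1) * a0)) mod d" unfolding b0_def by (simp add: mod_add_right_eq)
  also have "\<dots> = (f s0 + d * a0) mod d"
  proof -
    have "a0 + (f s0 + (d-1) * a0) = f s0 + d * a0" using dm1[OF d0, of a0] by (metis add.left_commute)
    then show ?thesis by (simp only:)
  qed
  finally have sum0: "sum_list m0 mod d = f s0 mod d" using sm0 by simp
  have "(\<Sum>k\<in>A. m0!k) = (\<Sum>k\<in>A. if k = i then a0 else 0)"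
  proof (rule sum.cong)
    fix k assume "k \<in> A"
    then have "k < n" "k \<noteq> j" using AuB jA by auto
    then show "m0 ! k = (if k = i then a0 else 0)" by (simp add: m0_def)
  qed simp
  also have "\<dots> = a0" using finA iA by simp
  finally have sA0: "(\<Sum>k\<in>A. m0!k) = a0" .
  have ind0: "ind 0 m0 s0 = 1" using sA0 by (simp add: ind_def a0_def)
  have ind1: "ind 1 m0 s0 = 0"
  proof -
    have "a0 mod d \<noteq> (fA s0 + 1) mod d"
    proof
      assume "a0 mod d = (fA s0 + 1) mod d"
      then have "(fA s0 + 0) mod d = (fA s0 + 1) mod d" by (simp add: a0_def)
      then have "0 mod d = 1 mod d" using mod_cancel_add by (metis add.commute)
      then show False using d2 by simp
    qed
    then show ?thesis using sA0 by (simp add: ind_def)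
  qed
  have pm0: "p m0 s0 > 0" using m0w s0 sum0 d0 by (simp add: pf_def)
  have neq: "g 1 \<noteq> g (-1)"
  proof
    assume "g 1 = g (-1)"
    then have "g 1 m0 s0 = g (-1) m0 s0" by simp
    then show False using ind0 ind1 pm0 by (simp add: g_def)
  qed
  have decomp: "p = (\<lambda>m s. (1 - 1/2) * g 1 m s + 1/2 * g (-1) m s)"
    by (auto simp: g_def algebra_simps intro!: ext)
  have g1: "g 1 \<in> NS n c d" by (rule gNS) simp_all
  have g2: "g (-1) \<in> NS n c d" by (rule gNS) simp_all
  show ?thesis unfolding extreme_point_fun_def
  proof
    assume "p \<in> NS n c d \<and> (\<forall>q\<in>NS n c d. \<forall>r\<in>NS n c d. \<forall>t::real. 0 < t \<and> t < 1 \<and> q \<noteq> r \<longrightarrow>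
        p \<noteq> (\<lambda>m s. (1 - t) * q m s + t * r m s))"
    then have H: "\<forall>q\<in>NS n c d. \<forall>r\<in>NS n c d. \<forall>t::real. 0 < t \<and> t < 1 \<and> q \<noteq> r \<longrightarrow>
        p \<noteq> (\<lambda>m s. (1 - t) * q m s + t * r m s)" by blast
    have "p \<noteq> (\<lambda>m s. (1 - 1/2) * g 1 m s + 1/2 * g (-1) m s)"
    proof -
      have "0 < (1/2::real) \<and> (1/2::real) < 1 \<and> g 1 \<noteq> g (-1)" using neq by simp
      from H[rule_format, OF g1 g2 this] show ?thesis .
    qed
    then show False using decomp by simp
  qed
qed

end



lemma uniq_words:
  assumes m1: "m1 \<in> words n d" and m2: "m2 \<in> words n d" and j: "j < n"
    and agree: "\<forall>i<n. i \<noteq> j \<longrightarrow> m1!i = m2!i" and sm: "sum_list m1 mod d = sum_list m2 mod d"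
  shows "m1 = m2"
proof -
  have l: "length m1 = n" "length m2 = n" using m1 m2 by (auto simp: words_iff)
  have upd: "m2 = m1[j := m2!j]"
    using l agree j by (intro nth_equalityI) (auto simp: nth_list_update)
  have "sum_list m2 + m1!j = sum_list m1 + m2!j"
    using sum_list_upd[of j m1 "m2!j"] l j upd by simp
  then have "(sum_list m2 + m1!j) mod d = (sum_list m2 + m2!j) mod d"
    using sm by (metis mod_add_left_eq)
  then have "(m1!j + sum_list m2) mod d = (m2!j + sum_list m2) mod d" by (simp add: ac_simps)
  then have "m1!j mod d = m2!j mod d" using mod_cancel_add by blast
  moreover have "m1!j < d" "m2!j < d" using m1 m2 j by (auto simp: words_iff)
  ultimately have "m1!j = m2!j" by simp
  then show ?thesis using upd by (metis list_update_id)
qed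

locale uq = setting +
  fixes q :: "nat list \<Rightarrow> nat list \<Rightarrow> real"
  assumes qNS: "q \<in> NS n c d" and supp: "\<And>m s. p m s = 0 \<Longrightarrow> q m s = 0"
begin

lemma qcd: "cond_dist n c d q" and qns: "non_signaling n c d q"
  using qNS by (auto simp: NS_def)

lemma vanish: "m \<in> words n d \<Longrightarrow> s \<in> words n c \<Longrightarrow> sum_list m mod d \<noteq> f s mod d \<Longrightarrow> q m s = 0"
  by (rule supp) (simp add: pf_def)

lemma marg_single:
  assumes j: "j < n" and t: "t \<in> words n c" and m: "m \<in> words n d" and m0: "m0 \<in> words n d"
    and ag: "\<forall>i<n. i \<noteq> j \<longrightarrow> m0!i = m!i" and sm: "sum_list m0 mod d = f t mod d"
  shows "marginal n d q ({0..<n} - {j}) m t = q m0 t"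
proof -
  define E where "E = {m'\<in>words n d. \<forall>i\<in>{0..<n} - {j}. m'!i = m!i}"
  have fin: "finite E" using finite_words by (simp add: E_def)
  have m0E: "m0 \<in> E" using m0 ag by (auto simp: E_def)
  have "marginal n d q ({0..<n} - {j}) m t = (\<Sum>m'\<in>E. q m' t)" by (simp add: marginal_def E_def)
  also have "\<dots> = q m0 t + (\<Sum>m'\<in>E - {m0}. q m' t)" using sum.remove[OF fin m0E] by simp
  also have "(\<Sum>m'\<in>E - {m0}. q m' t) = 0"
  proof (rule sum.neutral, rule ballI)
    fix m' assume m': "m' \<in> E - {m0}"
    then have m'w: "m' \<in> words n d" by (simp add: E_def)
    show "q m' t = 0"
    proof (rule vanish[OF m'w t])
      show "sum_list m' mod d \<noteq> f t mod d"
      proof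
        assume "sum_list m' mod d = f t mod d"
        then have "m' = m0" using uniq_words[OF m'w m0 j] m' ag sm by (auto simp: E_def)
        then show False using m' by simp
      qed
    qed
  qed
  finally show ?thesis by simp
qed

lemma H1:
  assumes s: "s \<in> words n c" and j: "j < n" and x: "x < c" and m: "m \<in> words n d"
    and sm: "sum_list m mod d = f s mod d" and K: "(f s + K) mod d = f (s[j:=x]) mod d"
  shows "q (shift d j K m) (s[j:=x]) = q m s"
proof -
  have s': "s[j:=x] \<in> words n c" using update_words[OF s x] .
  have jl: "j < length m" using m j by (simp add: words_iff)
  have sh: "shift d j K m \<in> words n d" using shift_words[OF m d0] .
  have "sum_list (shift d j K m) mod d = (sum_list m + K) mod d" using shift_sum[OF jl] .
  also have "\<dots> = (f s + K) mod d" using sm by (metis mod_add_left_eq)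
  finally have ssh: "sum_list (shift d j K m) mod d = f (s[j:=x]) mod d" using K by simp
  have "marginal n d q ({0..<n} - {j}) m s = marginal n d q ({0..<n} - {j}) m (s[j:=x])"
  proof -
    have ns: "\<And>S s s' m. S \<subseteq> {0..<n} \<Longrightarrow> s\<in>words n c \<Longrightarrow> s'\<in>words n c \<Longrightarrow> m \<in> words n d \<Longrightarrow>
       (\<forall>j\<in>S. s!j = s'!j) \<Longrightarrow> marginal n d q S m s = marginal n d q S m s'"
      using qns unfolding non_signaling_def by blast
    have "\<forall>i\<in>{0..<n} - {j}. s!i = s[j:=x]!i" by simp
    then show ?thesis using ns[OF _ s s' m] by blast
  qed
  moreover have "marginal n d q ({0..<n} - {j}) m s = q m s"
    using marg_single[OF j s m m _ sm] by simp
  moreover have "marginal n d q ({0..<n} - {j}) m (s[j:=x]) = q (shift d j K m) (s[j:=x])"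
    using marg_single[OF j s' m sh _ ssh] by (simp add: shift_nth)
  ultimately show ?thesis by simp
qed

definition inv :: "nat list \<Rightarrow> nat \<Rightarrow> nat \<Rightarrow> nat \<Rightarrow> bool" where
  "inv s i j a \<longleftrightarrow> (\<forall>m\<in>words n d. q m s = q (shift d i a (shift d j (a*(d-1)) m)) s)"

lemma inv_mod: "a mod d = b mod d \<Longrightarrow> inv s i j a = inv s i j b"
proof -
  assume ab: "a mod d = b mod d"
  have "(a*(d-1)) mod d = (b*(d-1)) mod d" using ab by (metis mod_mult_left_eq)
  then have "shift d i a (shift d j (a*(d-1)) m) = shift d i b (shift d j (b*(d-1)) m)" for m
    using ab shift_mod by metis
  then show ?thesis by (simp add: inv_def)
qed

lemma inv_iter: "inv s i j a \<Longrightarrow> inv s i j (k*a)"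
proof (induction k)
  case 0
  have "shift d i 0 (shift d j 0 m) = m" if "m \<in> words n d" for m
    using that shift_id[OF shift_words[OF that d0]] shift_id[OF that] by simp
  then show ?case by (simp add: inv_def)
next
  case (Suc k)
  show ?case unfolding inv_def
  proof
    fix m assume m: "m \<in> words n d"
    let ?T = "\<lambda>b m. shift d i b (shift d j (b*(d-1)) m)"
    have Tw: "?T a m \<in> words n d" using shift_words[OF shift_words[OF m d0] d0] .
    have "q m s = q (?T a m) s" using Suc.prems m by (simp add: inv_def)
    also have "\<dots> = q (?T (k*a) (?T a m)) s" using Suc.IH[OF Suc.prems] Tw by (simp add: inv_def)
    also have "?T (k*a) (?T a m) = shift d i (k*a + a) (shift d j (k*a*(d-1) + a*(d-1)) m)"
      by (simp only: shift_comm[of d j "k*a*(d-1)" i a] shift_shift)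
    also have "\<dots> = ?T (Suc k * a) m" by (simp add: algebra_simps)
    finally show "q m s = q (?T (Suc k * a) m) s" .
  qed
qed

lemma inv_one: "inv s i j a \<Longrightarrow> a mod d \<noteq> 0 \<Longrightarrow> inv s i j 1"
proof -
  assume ia: "inv s i j a" and a: "a mod d \<noteq> 0"
  have "a \<noteq> 0" using a by (metis mod_0)
  then obtain x y where xy: "a * x = d * y + gcd a d" using bezout_nat by blast
  have "\<not> d dvd a" using a by auto
  then have "coprime d a" using prime_imp_coprime_nat[OF pr] by blast
  then have "gcd a d = 1" by (simp add: coprime_iff_gcd_eq_1 gcd.commute)
  then have "x * a = 1 + d * y" using xy by (simp add: mult.commute)
  then have "(x * a) mod d = 1 mod d" by (rule mod_helper)
  moreover have "inv s i j (x*a)" by (rule inv_iter[OF ia])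
  ultimately show ?thesis using inv_mod[of "x*a" 1 s i j] by simp
qed

lemma inv_step:
  assumes t: "t \<in> words n c" and k: "k < n" and x: "x < c" and it: "inv t i j a"
    and i: "i < n" and j: "j < n"
  shows "inv (t[k:=x]) i j a"
  unfolding inv_def
proof
  fix m assume m: "m \<in> words n d"
  define t' where "t' = t[k:=x]"
  have t': "t' \<in> words n c" using update_words[OF t x] by (simp add: t'_def)
  have tk: "t!k < c" using t k by (simp add: words_iff)
  have tt: "t'[k := t!k] = t" by (simp add: t'_def)
  let ?K = "f t + (d-1) * f t'"
  have "f t' + ?K = f t + d * f t'" using dm1[OF d0, of "f t'"] by (simp add: algebra_simps)
  then have K: "(f t' + ?K) mod d = f (t'[k := t!k]) mod d" unfolding tt by (rule mod_helper)
  let ?T = "\<lambda>m. shift d i a (shift d j (a*(d-1)) m)"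
  have Tw: "?T m \<in> words n d" using shift_words[OF shift_words[OF m d0] d0] .
  have lm: "i < length m" "j < length m" using m i j by (auto simp: words_iff)
  have sT: "sum_list (?T m) mod d = sum_list m mod d"
  proof -
    have "sum_list (?T m) mod d = (sum_list m + a + a*(d-1)) mod d" using shift2_sum lm by blast
    also have "sum_list m + a + a*(d-1) = sum_list m + d * a" using dm1[OF d0, of a] by (simp add: mult.commute)
    finally show ?thesis by simp
  qed
  show "q m t' = q (?T m) t'"
  proof (cases "sum_list m mod d = f t' mod d")
    case True
    have sT': "sum_list (?T m) mod d = f t' mod d" using sT True by simp
    have "q (shift d k ?K m) t = q m t'" using H1[OF t' k tk m True K] unfolding tt .
    moreover have "q (shift d k ?K (?T m)) t = q (?T m) t'" using H1[OF t' k tk Tw sT' K] unfolding tt .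
    moreover have "q (shift d k ?K m) t = q (?T (shift d k ?K m)) t"
      using it shift_words[OF m d0] by (simp add: inv_def)
    moreover have "?T (shift d k ?K m) = shift d k ?K (?T m)" by (simp add: shift_comm)
    ultimately show ?thesis by (simp add: t'_def)
  next
    case False
    then show ?thesis using vanish[OF m t'] vanish[OF Tw t'] sT by (simp add: t'_def)
  qed
qed

end



lemma ar_square1:
  assumes "(F1 + F2 + a) mod d = (F12 + F0) mod (d::nat)" "0 < d"
  shows "(F1 + (d-1)*F0 + a) mod d = (F12 + (d-1)*F2) mod d"
proof -
  obtain e where e: "d = Suc e" using assms(2) by (cases d) auto
  from assms(1) obtain k where k: "int F1 + int F2 + int a - (int F12 + int F0) = int d * k"
    unfolding modeq_int by (auto elim!: dvdE)
  have "int (F1 + e*F0 + a) - int (F12 + e*F2) = int d * (k + int F0 - int F2)"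
    using k e by (simp add: algebra_simps)
  then show ?thesis unfolding modeq_int using e by (metis diff_Suc_1 dvd_triv_left)
qed

lemma ar_square2:
  assumes "(F1 + F2 + a) mod d = (F12 + F0) mod (d::nat)" "0 < d"
  shows "(F12 + (d-1)*F1 + a*(d-1)) mod d = (F2 + (d-1)*F0) mod d"
proof -
  obtain e where e: "d = Suc e" using assms(2) by (cases d) auto
  from assms(1) obtain k where k: "int F1 + int F2 + int a - (int F12 + int F0) = int d * k"
    unfolding modeq_int by (auto elim!: dvdE)
  have "int (F12 + e*F1 + a*e) - int (F2 + e*F0) = int d * (int F1 + int a - int F0 - k)"
    using k e by (simp add: algebra_simps)
  then show ?thesis unfolding modeq_int using e by (metis diff_Suc_1 dvd_triv_left)
qed

lemma ar_K: "0 < d \<Longrightarrow> (u + (v + (d-1)*u)) mod d = (v::nat) mod d"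
  by (rule mod_helper[of _ _ _ u]) (metis dm1 add.left_commute)

lemma ar_cross:
  assumes "(a + b) mod d = (c1 + e) mod (d::nat)" "(h + b) mod d = (c1 + g) mod d"
  shows "(a + g) mod d = (h + e) mod d"
proof -
  have h1: "int d dvd (int a + int b) - (int c1 + int e)" using assms(1) unfolding modeq_int by simp
  have h2: "int d dvd (int h + int b) - (int c1 + int g)" using assms(2) unfolding modeq_int by simp
  have eq: "((int a + int b) - (int c1 + int e)) - ((int h + int b) - (int c1 + int g)) = (int a + int g) - (int h + int e)"
    by simp
  have "int d dvd (int a + int g) - (int h + int e)" using dvd_diff[OF h1 h2] unfolding eq .
  then show ?thesis unfolding modeq_int by simp
qed

lemma ar_step:
  assumes "(a' + b) mod d = (b' + a) mod (d::nat)" "(a + z) mod d = (b + w) mod d"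
  shows "(a' + z) mod d = (b' + w) mod d"
proof -
  have h1: "int d dvd (int a' + int b) - (int b' + int a)" using assms(1) unfolding modeq_int by simp
  have h2: "int d dvd (int a + int z) - (int b + int w)" using assms(2) unfolding modeq_int by simp
  have eq: "((int a' + int b) - (int b' + int a)) + ((int a + int z) - (int b + int w)) = (int a' + int z) - (int b' + int w)"
    by simp
  have "int d dvd (int a' + int z) - (int b' + int w)" using dvd_add[OF h1 h2] unfolding eq .
  then show ?thesis unfolding modeq_int by simp
qed

lemma ar_final:
  assumes "(X + Z) mod d = (P + Q) mod (d::nat)" "0 < d"
  shows "X mod d = (P mod d + (Q + (d-1)*Z) mod d) mod d"
proof -
  obtain e where e: "d = Suc e" using assms(2) by (cases d) auto
  have h1: "int d dvd (int X + int Z) - (int P + int Q)" using assms(1) unfolding modeq_int by simp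
  have h2: "int d dvd int d * int Z" by simp
  have eq: "((int X + int Z) - (int P + int Q)) - int d * int Z = int X - int (P + (Q + e*Z))"
    using e by (simp add: algebra_simps)
  have "int d dvd int X - int (P + (Q + e*Z))" using dvd_diff[OF h1 h2] unfolding eq .
  then have "X mod d = (P + (Q + (d-1)*Z)) mod d" unfolding modeq_int using e by simp
  then show ?thesis by (simp add: mod_add_eq)
qed

context uq begin

lemma square:
  assumes s: "s \<in> words n c" and i: "i < n" and j: "j < n" and ij: "i \<noteq> j" and x: "x < c" and y: "y < c"
    and H: "(f (s[i:=x]) + f (s[j:=y]) + a) mod d = (f (s[i:=x, j:=y]) + f s) mod d"
  shows "inv s i j a"
  unfolding inv_def
proof
  fix m assume m: "m \<in> words n d"
  define s1 where "s1 = s[i:=x]"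
  define s2 where "s2 = s[j:=y]"
  have s1: "s1 \<in> words n c" using update_words[OF s x] by (simp add: s1_def)
  have s2: "s2 \<in> words n c" using update_words[OF s y] by (simp add: s2_def)
  have s12a: "s1[j:=y] = s[i:=x, j:=y]" by (simp add: s1_def)
  have s12b: "s2[i:=x] = s[i:=x, j:=y]" using ij by (simp add: s2_def list_update_swap)
  define A1 where "A1 = f s1 + (d-1) * f s"
  define B1 where "B1 = f (s[i:=x, j:=y]) + (d-1) * f s1"
  define A2 where "A2 = f s2 + (d-1) * f s"
  define B2 where "B2 = f (s[i:=x, j:=y]) + (d-1) * f s2"
  have KA1: "(f s + A1) mod d = f (s[i:=x]) mod d" unfolding A1_def s1_def using ar_K[OF d0] .
  have KB1: "(f s1 + B1) mod d = f (s1[j:=y]) mod d" unfolding B1_def s12a using ar_K[OF d0] .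
  have KA2: "(f s + A2) mod d = f (s[j:=y]) mod d" unfolding A2_def s2_def using ar_K[OF d0] .
  have KB2: "(f s2 + B2) mod d = f (s2[i:=x]) mod d" unfolding B2_def s12b using ar_K[OF d0] .
  have path1: "q (shift d j B1 (shift d i A1 m')) (s[i:=x, j:=y]) = q m' s"
    if m': "m' \<in> words n d" "sum_list m' mod d = f s mod d" for m'
  proof -
    have w: "shift d i A1 m' \<in> words n d" using shift_words[OF m'(1) d0] .
    have il: "i < length m'" using m' i by (simp add: words_iff)
    have "sum_list (shift d i A1 m') mod d = (sum_list m' + A1) mod d" using shift_sum[OF il] .
    also have "\<dots> = (f s + A1) mod d" using m'(2) by (metis mod_add_left_eq)
    finally have sm: "sum_list (shift d i A1 m') mod d = f s1 mod d" using KA1 by (simp add: s1_def)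
    have "q (shift d i A1 m') s1 = q m' s" using H1[OF s i x m'(1) m'(2) KA1] by (simp add: s1_def)
    moreover have "q (shift d j B1 (shift d i A1 m')) (s1[j:=y]) = q (shift d i A1 m') s1"
      using H1[OF s1 j y w sm KB1] .
    ultimately show ?thesis using s12a by simp
  qed
  have path2: "q (shift d i B2 (shift d j A2 m')) (s[i:=x, j:=y]) = q m' s"
    if m': "m' \<in> words n d" "sum_list m' mod d = f s mod d" for m'
  proof -
    have w: "shift d j A2 m' \<in> words n d" using shift_words[OF m'(1) d0] .
    have jl: "j < length m'" using m' j by (simp add: words_iff)
    have "sum_list (shift d j A2 m') mod d = (sum_list m' + A2) mod d" using shift_sum[OF jl] .
    also have "\<dots> = (f s + A2) mod d" using m'(2) by (metis mod_add_left_eq)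
    finally have sm: "sum_list (shift d j A2 m') mod d = f s2 mod d" using KA2 by (simp add: s2_def)
    have "q (shift d j A2 m') s2 = q m' s" using H1[OF s j y m'(1) m'(2) KA2] by (simp add: s2_def)
    moreover have "q (shift d i B2 (shift d j A2 m')) (s2[i:=x]) = q (shift d j A2 m') s2"
      using H1[OF s2 i x w sm KB2] .
    ultimately show ?thesis using s12b by simp
  qed
  let ?T = "shift d i a (shift d j (a*(d-1)) m)"
  have Tw: "?T \<in> words n d" using shift_words[OF shift_words[OF m d0] d0] .
  have lm: "i < length m" "j < length m" using m i j by (auto simp: words_iff)
  have sT: "sum_list ?T mod d = sum_list m mod d"
  proof -
    have "sum_list ?T mod d = (sum_list m + a + a*(d-1)) mod d" using shift2_sum lm by blast
    also have "sum_list m + a + a*(d-1) = sum_list m + d * a" using dm1[OF d0, of a] by (simp add: mult.commute)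
    finally show ?thesis by simp
  qed
  show "q m s = q ?T s"
  proof (cases "sum_list m mod d = f s mod d")
    case True
    have e1: "(A1 + a) mod d = B2 mod d"
      unfolding A1_def B2_def s1_def s2_def using ar_square1[OF H d0] .
    have e2: "(B1 + a*(d-1)) mod d = A2 mod d"
      unfolding B1_def A2_def s1_def s2_def using ar_square2[OF H d0] .
    have "shift d j B1 (shift d i A1 ?T) = shift d i (A1 + a) (shift d j (B1 + a*(d-1)) m)"
      by (simp only: shift_shift shift_comm[of d j B1 i "A1 + a"] add.commute)
    also have "\<dots> = shift d i B2 (shift d j A2 m)"
      using shift_mod[OF e1] shift_mod[OF e2] by metis
    finally have eq: "shift d j B1 (shift d i A1 ?T) = shift d i B2 (shift d j A2 m)" .
    have "q ?T s = q (shift d j B1 (shift d i A1 ?T)) (s[i:=x, j:=y])"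
      using path1[OF Tw] sT True by simp
    also have "\<dots> = q m s" unfolding eq using path2[OF m True] .
    finally show ?thesis by simp
  next
    case False
    then show ?thesis using vanish[OF m s] vanish[OF Tw s] sT by simp
  qed
qed

lemma compose: "inv s 0 i 1 \<Longrightarrow> inv s i j 1 \<Longrightarrow> inv s 0 j 1"
  unfolding inv_def
proof
  fix m assume a1: "\<forall>m\<in>words n d. q m s = q (shift d 0 1 (shift d i (1 * (d - 1)) m)) s"
    and a2: "\<forall>m\<in>words n d. q m s = q (shift d i 1 (shift d j (1 * (d - 1)) m)) s"
    and m: "m \<in> words n d"
  let ?Y = "shift d j (d-1) m"
  have Y: "?Y \<in> words n d" using shift_words[OF m d0] .
  have X: "shift d i 1 ?Y \<in> words n d" using shift_words[OF Y d0] .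
  have "q m s = q (shift d i 1 ?Y) s" using a2 m by simp
  also have "\<dots> = q (shift d 0 1 (shift d i (d-1) (shift d i 1 ?Y))) s" using a1 X by simp
  also have "shift d i (d-1) (shift d i 1 ?Y) = ?Y"
    using shift_id[OF Y, of "d-1+1" i] d0 by (simp add: shift_shift)
  finally show "q m s = q (shift d 0 1 (shift d j (1 * (d - 1)) m)) s" by simp
qed

lemma inv_refl: "inv s 0 0 1"
  unfolding inv_def
proof
  fix m assume m: "m \<in> words n d"
  have "shift d 0 1 (shift d 0 (d-1) m) = m"
    using shift_id[OF m, of "1+(d-1)" 0] d0 by (simp add: shift_shift)
  then show "q m s = q (shift d 0 1 (shift d 0 (1 * (d - 1)) m)) s" by simp
qed

lemma transport:
  assumes "inv s i j a" "s \<in> words n c" "s' \<in> words n c" "i < n" "j < n"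
  shows "inv s' i j a"
proof (rule path[OF assms(2,3), where P="\<lambda>t. inv t i j a"])
  show "inv s i j a" by fact
next
  fix k assume k: "k < n" and it: "inv (mix k s s') i j a"
  have "s'!k < c" using assms(3) k by (simp add: words_iff)
  then show "inv ((mix k s s')[k := s'!k]) i j a"
    using inv_step[OF mix_words[OF assms(2,3)] k _ it assms(4,5)] by simp
qed

end



context setting begin

lemma claim1:
  assumes AS: "A \<subseteq> {0..<n}"
    and cross: "\<forall>i\<in>A. \<forall>j<n. j \<notin> A \<longrightarrow> (\<forall>s\<in>words n c. \<forall>x<c. \<forall>y<c.
        (f (s[i:=x, j:=y]) + f s) mod d = (f (s[i:=x]) + f (s[j:=y])) mod d)"
    and t: "t \<in> words n c" and t': "t' \<in> words n c" and ag: "\<forall>k\<in>A. t!k = t'!k"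
    and iA: "i \<in> A" and x: "x < c"
  shows "(f (t[i:=x]) + f t') mod d = (f (t'[i:=x]) + f t) mod d"
proof (rule path[OF t t', where P="\<lambda>u. (f (t[i:=x]) + f u) mod d = (f (u[i:=x]) + f t) mod d"])
  show "(f (t[i:=x]) + f t) mod d = (f (t[i:=x]) + f t) mod d" by simp
next
  fix k assume k: "k < n" and P: "(f (t[i:=x]) + f (mix k t t')) mod d = (f ((mix k t t')[i:=x]) + f t) mod d"
  define u where "u = mix k t t'"
  have u: "u \<in> words n c" using mix_words[OF t t'] by (simp add: u_def)
  have lt: "length t = n" using t by (simp add: words_iff)
  show "(f (t[i:=x]) + f ((mix k t t')[k := t'!k])) mod d = (f (((mix k t t')[k := t'!k])[i:=x]) + f t) mod d"
  proof (cases "k \<in> A")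
    case True
    then have "u!k = t'!k" using ag k lt by (simp add: u_def mix_nth)
    then have "u[k := t'!k] = u" by (metis list_update_id)
    then show ?thesis using P by (simp add: u_def)
  next
    case False
    have y: "t'!k < c" using t' k by (simp add: words_iff)
    have ik: "i \<noteq> k" using iA False by auto
    have cr: "(f (u[i:=x, k:=t'!k]) + f u) mod d = (f (u[i:=x]) + f (u[k:=t'!k])) mod d"
      using cross iA k False u x y by blast
    have sw: "u[k:=t'!k, i:=x] = u[i:=x, k:=t'!k]" using ik by (simp add: list_update_swap)
    show ?thesis unfolding u_def[symmetric] sw
      using ar_cross[OF P[folded u_def] cr] .
  qed
qed

lemma cross_BL:
  assumes AS: "A \<subseteq> {0..<n}" and Ane: "A \<noteq> {}" and Bne: "{0..<n} - A \<noteq> {}"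
    and cross: "\<forall>i\<in>A. \<forall>j<n. j \<notin> A \<longrightarrow> (\<forall>s\<in>words n c. \<forall>x<c. \<forall>y<c.
        (f (s[i:=x, j:=y]) + f s) mod d = (f (s[i:=x]) + f (s[j:=y])) mod d)"
  shows "bipartite_linear n c d f"
proof -
  define zA where "zA s = map (\<lambda>k. if k \<in> A then s!k else 0) [0..<n]" for s :: "nat list"
  define zB where "zB s = map (\<lambda>k. if k \<in> A then 0 else s!k) [0..<n]" for s :: "nat list"
  define z0 where "z0 = replicate n (0::nat)"
  have c0: "0 < c" using c2 by simp
  have zAw: "zA s \<in> words n c" if "s \<in> words n c" for s using that c0 by (auto simp: zA_def words_iff)
  have zBw: "zB s \<in> words n c" if "s \<in> words n c" for s using that c0 by (auto simp: zB_def words_iff)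
  have z0w: "z0 \<in> words n c" using c0 by (simp add: z0_def words_def)
  have main: "(f s + f z0) mod d = (f (zA s) + f (zB s)) mod d" if s: "s \<in> words n c" for s
  proof -
    have ls: "length s = n" using s by (simp add: words_iff)
    have lB: "length (zB s) = n" "length z0 = n" by (simp_all add: zB_def z0_def)
    have "k \<le> n \<Longrightarrow> (f (mix k (zB s) s) + f z0) mod d = (f (mix k z0 (zA s)) + f (zB s)) mod d" for k
    proof (induction k)
      case 0 then show ?case by (simp add: mix_0 add.commute)
    next
      case (Suc k)
      then have k: "k < n" by simp
      have IH: "(f (mix k (zB s) s) + f z0) mod d = (f (mix k z0 (zA s)) + f (zB s)) mod d"
        using Suc by simp
      have eqa: "mix (Suc k) (zB s) s = (mix k (zB s) s)[k := s!k]" using mix_Suc[of k "zB s" s] lB k by simp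
      have eqb: "mix (Suc k) z0 (zA s) = (mix k z0 (zA s))[k := zA s!k]" using mix_Suc[of k z0 "zA s"] lB k by simp
      show ?case
      proof (cases "k \<in> A")
        case True
        have ag: "\<forall>l\<in>A. mix k (zB s) s ! l = mix k z0 (zA s) ! l"
          using AS lB by (auto simp: mix_nth zA_def zB_def z0_def)
        have zk: "zA s ! k = s!k" using True k by (simp add: zA_def)
        have sk: "s!k < c" using s k by (simp add: words_iff)
        have c1: "(f ((mix k (zB s) s)[k:=s!k]) + f (mix k z0 (zA s))) mod d = (f ((mix k z0 (zA s))[k:=s!k]) + f (mix k (zB s) s)) mod d"
          using claim1[OF AS cross mix_words[OF zBw[OF s] s] mix_words[OF z0w zAw[OF s]] ag True sk] .
        show ?thesis unfolding eqa eqb zk using ar_step[OF c1 IH] .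
      next
        case False
        have "mix k (zB s) s ! k = s!k" using False k lB by (simp add: mix_nth zB_def)
        then have a: "(mix k (zB s) s)[k := s!k] = mix k (zB s) s" by (metis list_update_id)
        have "mix k z0 (zA s) ! k = zA s ! k" using False k lB by (simp add: mix_nth zA_def z0_def)
        then have b: "(mix k z0 (zA s))[k := zA s!k] = mix k z0 (zA s)" by (metis list_update_id)
        show ?thesis unfolding eqa eqb a b using IH .
      qed
    qed
    then have "(f (mix n (zB s) s) + f z0) mod d = (f (mix n z0 (zA s)) + f (zB s)) mod d" by simp
    moreover have "mix n (zB s) s = s" using mix_n[of s "zB s"] lB ls by simp
    moreover have "mix n z0 (zA s) = zA s" using mix_n[of "zA s" z0] lB by (simp add: zA_def)
    ultimately show ?thesis by simp
  qed
  define fA where "fA s = f (zA s) mod d" for s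
  define fB where "fB s = (f (zB s) + (d-1) * f z0) mod d" for s
  have D1: "depends_only_on n c A fA"
    unfolding depends_only_on_def
  proof (intro ballI impI)
    fix s s' :: "nat list" assume "\<forall>j\<in>A. s ! j = s' ! j"
    then have "zA s = zA s'" by (simp add: zA_def)
    then show "fA s = fA s'" by (simp add: fA_def)
  qed
  have D2: "depends_only_on n c ({0..<n} - A) fB"
    unfolding depends_only_on_def
  proof (intro ballI impI)
    fix s s' :: "nat list" assume "\<forall>j\<in>{0..<n} - A. s ! j = s' ! j"
    then have "zB s = zB s'" by (simp add: zB_def)
    then show "fB s = fB s'" by (simp add: fB_def)
  qed
  have D3: "\<forall>s\<in>words n c. fA s < d \<and> fB s < d" using d0 by (simp add: fA_def fB_def)
  have D4: "\<forall>s\<in>words n c. f s mod d = (fA s + fB s) mod d"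
  proof
    fix s assume s: "s \<in> words n c"
    show "f s mod d = (fA s + fB s) mod d"
      unfolding fA_def fB_def using ar_final[OF main[OF s] d0] .
  qed
  have D5: "A \<inter> ({0..<n} - A) = {}" "A \<union> ({0..<n} - A) = {0..<n}" using AS by auto
  show ?thesis unfolding bipartite_linear_def
    by (rule exI[of _ A], rule exI[of _ "{0..<n} - A"], rule exI[of _ fA], rule exI[of _ fB])
       (intro conjI Ane Bne D1 D2 D3 D4 D5)
qed

end

context uq begin

lemma const_supp:
  assumes all: "\<forall>j<n. \<forall>s\<in>words n c. inv s 0 j 1" and s: "s \<in> words n c"
  shows "\<forall>m\<in>words n d. sum_list m mod d = f s mod d \<longrightarrow> q m s = q ((f s mod d) # replicate (n-1) 0) s"
proof -
  define m0 where "m0 = (f s mod d) # replicate (n-1) (0::nat)"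
  have "\<forall>m\<in>words n d. sum_list m mod d = f s mod d \<longrightarrow> (\<forall>j. Suc k \<le> j \<and> j < n \<longrightarrow> m!j = 0) \<longrightarrow> q m s = q m0 s" for k
  proof (induction k)
    case 0
    show ?case
    proof (intro ballI impI)
      fix m assume m: "m \<in> words n d" and sm: "sum_list m mod d = f s mod d"
        and z: "\<forall>j. Suc 0 \<le> j \<and> j < n \<longrightarrow> m!j = 0"
      have lm: "length m = n" using m by (simp add: words_iff)
      have mform: "m = (m!0) # replicate (n-1) 0"
      proof (rule nth_equalityI)
        show "length m = length (m!0 # replicate (n-1) 0)" using lm n2 by simp
      next
        fix i assume "i < length m"
        then show "m!i = (m!0 # replicate (n-1) 0) ! i" using z lm by (cases i) auto
      qed
      have "sum_list m = m!0" by (subst mform) simp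
      moreover have "m!0 < d" using m n2 by (simp add: words_iff)
      ultimately have "m!0 = f s mod d" using sm by simp
      then have "m = m0" using mform by (simp add: m0_def)
      then show "q m s = q m0 s" by simp
    qed
  next
    case (Suc k)
    show ?case
    proof (intro ballI impI)
      fix m assume m: "m \<in> words n d" and sm: "sum_list m mod d = f s mod d"
        and z: "\<forall>j. Suc (Suc k) \<le> j \<and> j < n \<longrightarrow> m!j = 0"
      show "q m s = q m0 s"
      proof (cases "Suc k < n")
        case False
        then have "\<forall>j. Suc k \<le> j \<and> j < n \<longrightarrow> m!j = 0" by auto
        then show ?thesis using Suc.IH m sm by blast
      next
        case True
        define v where "v = m ! Suc k"
        define m1 where "m1 = shift d 0 v (shift d (Suc k) (v*(d-1)) m)"
        have lm: "length m = n" using m by (simp add: words_iff)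
        have m1w: "m1 \<in> words n d" unfolding m1_def using shift_words[OF shift_words[OF m d0] d0] .
        have iv: "inv s 0 (Suc k) v" using inv_iter[of s 0 "Suc k" 1 v] all True s by simp
        have qm: "q m s = q m1 s" using iv m by (simp add: inv_def m1_def)
        have "sum_list m1 mod d = (sum_list m + v + v*(d-1)) mod d"
          unfolding m1_def using shift2_sum[of 0 m "Suc k" d v "v*(d-1)"] lm True by simp
        also have "sum_list m + v + v*(d-1) = sum_list m + d * v" using dm1[OF d0, of v] by (simp add: mult.commute)
        finally have sm1: "sum_list m1 mod d = f s mod d" using sm by simp
        have "m1 ! Suc k = (v + v*(d-1)) mod d" using lm True by (simp add: m1_def shift_nth v_def)
        also have "v + v*(d-1) = d * v" using dm1[OF d0, of v] by (simp add: mult.commute)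
        finally have z1: "m1 ! Suc k = 0" by simp
        have "\<forall>j. Suc k \<le> j \<and> j < n \<longrightarrow> m1!j = 0"
        proof (intro allI impI)
          fix j assume j: "Suc k \<le> j \<and> j < n"
          show "m1!j = 0"
          proof (cases "j = Suc k")
            case True then show ?thesis using z1 by simp
          next
            case False
            then have "m1!j = m!j" using j by (simp add: m1_def shift_nth)
            then show ?thesis using z j False by auto
          qed
        qed
        then have "q m1 s = q m0 s" using Suc.IH m1w sm1 by blast
        then show ?thesis using qm by simp
      qed
    qed
  qed
  from this[of n] show ?thesis by (simp add: m0_def)
qed

lemma q_eq_p:
  assumes nbl: "\<not> bipartite_linear n c d f"
  shows "q = p"
proof -
  define A where "A = {j. j < n \<and> (\<forall>s\<in>words n c. inv s 0 j 1)}"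
  have allA: "\<forall>j<n. j \<in> A"
  proof (rule ccontr)
    assume "\<not> (\<forall>j<n. j \<in> A)"
    then obtain j0 where j0: "j0 < n" "j0 \<notin> A" by blast
    have AS: "A \<subseteq> {0..<n}" by (auto simp: A_def)
    have A0: "0 \<in> A" using n2 inv_refl by (simp add: A_def)
    have cross: "\<forall>i\<in>A. \<forall>j<n. j \<notin> A \<longrightarrow> (\<forall>s\<in>words n c. \<forall>x<c. \<forall>y<c.
        (f (s[i:=x, j:=y]) + f s) mod d = (f (s[i:=x]) + f (s[j:=y])) mod d)"
    proof (intro ballI allI impI)
      fix i j s x y assume iA: "i \<in> A" and j: "j < n" and jA: "j \<notin> A" and s: "s \<in> words n c"
        and x: "x < c" and y: "y < c"
      show "(f (s[i:=x, j:=y]) + f s) mod d = (f (s[i:=x]) + f (s[j:=y])) mod d"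
      proof (rule ccontr)
        assume ne: "(f (s[i:=x, j:=y]) + f s) mod d \<noteq> (f (s[i:=x]) + f (s[j:=y])) mod d"
        define a where "a = f (s[i:=x, j:=y]) + f s + (d-1) * (f (s[i:=x]) + f (s[j:=y]))"
        have H: "(f (s[i:=x]) + f (s[j:=y]) + a) mod d = (f (s[i:=x, j:=y]) + f s) mod d"
          unfolding a_def by (rule ar_K[OF d0])
        have amod: "a mod d \<noteq> 0"
        proof
          assume "a mod d = 0"
          then have "(f (s[i:=x]) + f (s[j:=y]) + a) mod d = (f (s[i:=x]) + f (s[j:=y])) mod d"
            by (metis add.right_neutral mod_add_right_eq)
          then show False using H ne by simp
        qed
        have i: "i < n" using iA by (simp add: A_def)
        have ij: "i \<noteq> j" using iA jA by auto
        have "inv s i j a" by (rule square[OF s i j ij x y H])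
        then have "inv s i j 1" using inv_one amod by blast
        then have "inv s' 0 j 1" if s': "s' \<in> words n c" for s'
        proof -
          have "inv s' i j 1" using transport[OF \<open>inv s i j 1\<close> s s' i j] .
          moreover have "inv s' 0 i 1" using iA s' by (simp add: A_def)
          ultimately show ?thesis using compose by blast
        qed
        then have "j \<in> A" using j by (simp add: A_def)
        then show False using jA by simp
      qed
    qed
    have "{0..<n} - A \<noteq> {}" using j0 by auto
    then have "bipartite_linear n c d f" using cross_BL[OF AS _ _ cross] A0 by blast
    then show False using nbl by simp
  qed
  then have all: "\<forall>j<n. \<forall>s\<in>words n c. inv s 0 j 1" by (simp add: A_def)
  show ?thesis
  proof (intro ext)
    fix m s
    show "q m s = p m s"
    proof (cases "m \<in> words n d \<and> s \<in> words n c")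
      case False
      then show ?thesis using qcd by (auto simp: cond_dist_def pf_def)
    next
      case True
      then have m: "m \<in> words n d" and s: "s \<in> words n c" by auto
      define cst where "cst = q ((f s mod d) # replicate (n-1) 0) s"
      have cs: "\<forall>m\<in>words n d. sum_list m mod d = f s mod d \<longrightarrow> q m s = cst"
        using const_supp[OF all s] by (simp add: cst_def)
      have "(\<Sum>m\<in>words n d. q m s) = (\<Sum>m\<in>words n d. if sum_list m mod d = f s mod d then cst else 0)"
        using cs vanish[OF _ s] by (intro sum.cong) auto
      also have "\<dots> = real (card (W s)) * cst" by (rule sum_const_W)
      finally have "real d ^ (n-1) * cst = 1" using qcd s card_W by (simp add: cond_dist_def)
      then have cst: "cst = 1 / real d ^ (n-1)" using d0 by (simp add: field_simps)
      show ?thesis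
        using cs m s vanish[OF m s] cst by (auto simp: pf_def)
    qed
  qed
qed

end

theorem proposition2:
  fixes n c d :: nat and f :: "nat list \<Rightarrow> nat"
  assumes "n \<ge> 2" and "c \<ge> 2" and "prime d"
    and "\<forall>s\<in>words n c. f s < d"
  shows "extreme_point_fun (pf n c d f) (NS n c d) \<longleftrightarrow> \<not> bipartite_linear n c d f"
proof -
  interpret setting n c d f using assms by unfold_locales
  show ?thesis
  proof
    assume "extreme_point_fun (pf n c d f) (NS n c d)"
    then show "\<not> bipartite_linear n c d f" using BL_not_extreme by blast
  next
    assume nbl: "\<not> bipartite_linear n c d f"
    have uniq: "q = pf n c d f" if q: "q \<in> NS n c d" and sup: "\<And>m s. pf n c d f m s = 0 \<Longrightarrow> q m s = 0" for q
    proof -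
      interpret uq n c d f q using q sup by unfold_locales
      show ?thesis using q_eq_p[OF nbl] .
    qed
    show "extreme_point_fun (pf n c d f) (NS n c d)"
      unfolding extreme_point_fun_def
    proof (intro conjI ballI allI impI)
      show "pf n c d f \<in> NS n c d" by (rule pf_NS)
    next
      fix q r and t :: real
      assume q: "q \<in> NS n c d" and r: "r \<in> NS n c d" and tt: "0 < t \<and> t < 1 \<and> q \<noteq> r"
      show "pf n c d f \<noteq> (\<lambda>m s. (1 - t) * q m s + t * r m s)"
      proof
        assume eq: "pf n c d f = (\<lambda>m s. (1 - t) * q m s + t * r m s)"
        have qn: "0 \<le> q m s" "0 \<le> r m s" for m s using q r by (auto simp: NS_def cond_dist_def)
        have z: "q m s = 0 \<and> r m s = 0" if "pf n c d f m s = 0" for m s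
        proof -
          have "(1 - t) * q m s + t * r m s = 0" using that eq by metis
          moreover have "0 \<le> (1 - t) * q m s" "0 \<le> t * r m s" using tt qn by auto
          ultimately have "(1 - t) * q m s = 0" "t * r m s = 0" by linarith+
          then show ?thesis using tt by auto
        qed
        have "q = pf n c d f" using uniq[OF q] z by blast
        moreover have "r = pf n c d f" using uniq[OF r] z by blast
        ultimately show False using tt by simp
      qed
    qed
  qed
qed



end
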